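(* Under the hypotheses of the previous statement (small perturbation, of size $\varepsilon$, of Schwarzschild data with mass parameter $M$ prescribed on $\{r=2^{-l_0}\}$), there exist constants $C,c>0$ depending only on $M$ such that throughout the trapezoid region $T_0$, $$\Omega^{-2}(u,v)\le C\,r(u,v)^{1-c\varepsilon^2}.$$
   Context: The Einstein–scalar field system under spherical symmetry in double null coordinates, $g=-\Omega^2(u,v)\,du\,dv+r^2(u,v)(d\theta^2+\sin^2\theta\,d\varphi^2)$, with scalar field $\phi$, reads $r\partial_u\partial_v r=-\partial_ur\,\partial_vr-\frac14\Omega^2$, $r^2\partial_u\partial_v\log\Omega=\partial_ur\,\partial_vr+\frac14\Omega^2-r^2\partial_u\phi\,\partial_v\phi$, $r\partial_u\partial_v\phi=-\partial_ur\,\partial_v\phi-\partial_vr\,\partial_u\phi$, $\partial_u(\Omega^{-2}\partial_ur)=-r\Omega^{-2}(\partial_u\phi)^2$, $\partial_v(\Omega^{-2}\partial_vr)=-r\Omega^{-2}(\partial_v\phi)^2$. Fix $M>0$, $l_0$ large and $\varepsilon>0$ small. The trapezoid region $T_0$ is the open region in the trapped region bounded to the past by the spacelike curve $\{r=2^{-l_0}\}$, to the future by $\{r=0\}$, and on the sides by null segments $\{u=U\}$, $\{v=V\}$. The hypotheses are that on $\{r=2^{-l_0}\}$: $|\partial_vr+M/r|\le\varepsilon M/r$, $|\partial_ur+M/r|\le\varepsilon M/r$, $|\Omega^2-2M/r|\le\varepsilon M/r$, $|\partial_u\phi|\le\varepsilon/r^2$, $|\partial_v\phi|\le\varepsilon/r^2$.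 *)

theory Defs
  imports "HOL-Analysis.Analysis"
begin

definition du :: "(real \<times> real \<Rightarrow> real) \<Rightarrow> real \<times> real \<Rightarrow> real" where
  "du f p = deriv (\<lambda>s. f (s, snd p)) (fst p)"

definition dv :: "(real \<times> real \<Rightarrow> real) \<Rightarrow> real \<times> real \<Rightarrow> real" where
  "dv f p = deriv (\<lambda>s. f (fst p, s)) (snd p)"

definition C2_on :: "(real \<times> real) set \<Rightarrow> (real \<times> real \<Rightarrow> real) \<Rightarrow> bool" where
  "C2_on D f \<longleftrightarrow> f differentiable_on D \<and> du f differentiable_on D \<and> dv f differentiable_on D
     \<and> continuous_on D (du (du f)) \<and> continuous_on D (du (dv f))
     \<and> continuous_on D (dv (du f)) \<and> continuous_on D (dv (dv f))"

text \<open>Spherically symmetric Einstein--scalar field system in double null gauge,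
  g = -Omega^2 du dv + r^2 (round metric), on the open set D.\<close>
definition ES_solution ::
  "(real \<times> real) set \<Rightarrow> (real \<times> real \<Rightarrow> real) \<Rightarrow> (real \<times> real \<Rightarrow> real) \<Rightarrow> (real \<times> real \<Rightarrow> real) \<Rightarrow> bool"
where
  "ES_solution D r \<Omega> \<phi> \<longleftrightarrow> open D \<and> C2_on D r \<and> C2_on D \<Omega> \<and> C2_on D \<phi> \<and>
   (\<forall>p\<in>D. r p > 0 \<and> \<Omega> p > 0 \<and>
     r p * du (dv r) p = - du r p * dv r p - (\<Omega> p)\<^sup>2 / 4 \<and>
     (r p)\<^sup>2 * du (dv (\<lambda>q. ln (\<Omega> q))) p
        = du r p * dv r p + (\<Omega> p)\<^sup>2 / 4 - (r p)\<^sup>2 * du \<phi> p * dv \<phi> p \<and>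
     r p * du (dv \<phi>) p = - du r p * dv \<phi> p - dv r p * du \<phi> p \<and>
     du (\<lambda>q. du r q / (\<Omega> q)\<^sup>2) p = - r p * (du \<phi> p)\<^sup>2 / (\<Omega> p)\<^sup>2 \<and>
     dv (\<lambda>q. dv r q / (\<Omega> q)\<^sup>2) p = - r p * (dv \<phi> p)\<^sup>2 / (\<Omega> p)\<^sup>2)"

definition curve :: "(real \<times> real) set \<Rightarrow> (real \<times> real \<Rightarrow> real) \<Rightarrow> nat \<Rightarrow> real \<Rightarrow> real \<Rightarrow> (real \<times> real) set" where
  "curve D r l0 U V = {p \<in> D. fst p \<le> U \<and> snd p \<le> V \<and> r p = inverse (2 ^ l0)}"

text \<open>The open trapezoid region T0: to the future of {r = 2^{-l0}} (where r < 2^{-l0}),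
  up to {r = 0} (the edge of the domain, where r > 0), and bounded by u < U, v < V.\<close>
definition trapezoid :: "(real \<times> real) set \<Rightarrow> (real \<times> real \<Rightarrow> real) \<Rightarrow> nat \<Rightarrow> real \<Rightarrow> real \<Rightarrow> (real \<times> real) set" where
  "trapezoid D r l0 U V = {p \<in> D. fst p < U \<and> snd p < V \<and> r p < inverse (2 ^ l0)}"

text \<open>Geometric assumptions: T0 lies in the trapped region, and its past boundary is the curve:
  the past-directed null segments from every point of T0 stay in T0 until they hit the curve.\<close>
definition trapezoid_geometry :: "(real \<times> real) set \<Rightarrow> (real \<times> real \<Rightarrow> real) \<Rightarrow> nat \<Rightarrow> real \<Rightarrow> real \<Rightarrow> bool" where
  "trapezoid_geometry D r l0 U V \<longleftrightarrow>
    (\<forall>p\<in>trapezoid D r l0 U V. du r p < 0 \<and> dv r p < 0) \<and>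
    (\<forall>u v. (u, v) \<in> trapezoid D r l0 U V \<longrightarrow>
       (\<exists>u0 \<le> u. (u0, v) \<in> curve D r l0 U V \<and> (\<forall>s. u0 < s \<and> s \<le> u \<longrightarrow> (s, v) \<in> trapezoid D r l0 U V)) \<and>
       (\<exists>v0 \<le> v. (u, v0) \<in> curve D r l0 U V \<and> (\<forall>s. v0 < s \<and> s \<le> v \<longrightarrow> (u, s) \<in> trapezoid D r l0 U V)))"

definition near_schwarzschild_data ::
  "real \<Rightarrow> real \<Rightarrow> (real \<times> real) set \<Rightarrow> (real \<times> real \<Rightarrow> real) \<Rightarrow> (real \<times> real \<Rightarrow> real) \<Rightarrow> (real \<times> real \<Rightarrow> real) \<Rightarrow> bool"
where
  "near_schwarzschild_data M \<epsilon> \<Gamma> r \<Omega> \<phi> \<longleftrightarrow> (\<forall>p\<in>\<Gamma>.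
     \<bar>dv r p + M / r p\<bar> \<le> \<epsilon> * M / r p \<and>
     \<bar>du r p + M / r p\<bar> \<le> \<epsilon> * M / r p \<and>
     \<bar>(\<Omega> p)\<^sup>2 - 2 * M / r p\<bar> \<le> \<epsilon> * M / r p \<and>
     \<bar>du \<phi> p\<bar> \<le> \<epsilon> / (r p)\<^sup>2 \<and>
     \<bar>dv \<phi> p\<bar> \<le> \<epsilon> / (r p)\<^sup>2)"

end

theory Submission
  imports Defs
begin

lemma alg_al:
  fixes a n l P Q w X Y :: real
  assumes "a \<noteq> 0" "n \<noteq> 0" "l \<noteq> 0" "a*X = -n*l - w^2/4" "a*Y = -n*Q - l*P"
  shows "((l*P + Y*a)*n - a*P*X)/(n*n) = (l/a)*((a*P/n)*(1 + w^2/(4*n*l)) - a*Q/l)"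
proof -
  have X: "X = (-n*l - w^2/4)/a" and Y: "Y = (-n*Q - l*P)/a"
    using assms by (simp_all add: field_simps)
  show ?thesis unfolding X Y using assms(1-3) by (simp add: field_simps power2_eq_square)
qed
lemma alg_be:
  fixes a n l P Q w X Y :: real
  assumes "a \<noteq> 0" "n \<noteq> 0" "l \<noteq> 0" "a*X = -n*l - w^2/4" "a*Y = -n*Q - l*P"
  shows "((n*Q + Y*a)*l - a*Q*X)/(l*l) = (n/a)*((a*Q/l)*(1 + w^2/(4*n*l)) - a*P/n)"
proof -
  have X: "X = (-n*l - w^2/4)/a" and Y: "Y = (-n*Q - l*P)/a"
    using assms by (simp_all add: field_simps)
  show ?thesis unfolding X Y using assms(1-3) by (simp add: field_simps power2_eq_square)
qed
lemma alg_W: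
  fixes a n l Q w X b :: real
  assumes "a \<noteq> 0" "n \<noteq> 0" "l \<noteq> 0" "w \<noteq> 0" "a*X = -n*l - w^2/4" "b = a*Q/l"
  shows "(l*n + X*a)*(l/w^2) + (-a*Q^2/w^2)*(a*n) = -l/4 - (l/a)*b^2*(a*n*(l/w^2))"
proof -
  have X: "X = (-n*l - w^2/4)/a"
    using assms by (simp_all add: field_simps)
  show ?thesis unfolding X assms(6) using assms(1-4) by (simp add: field_simps power2_eq_square)
qed
lemma max_contra:
  fixes f :: "real \<Rightarrow> real" and x a b c k Fm \<delta> :: real
  assumes d: "DERIV f x :> c * (a * (1 + k) - b)" and c: "c < 0" and k: "k > 0"
    and fx: "f x = a" and \<delta>: "\<delta> > 0" and nb: "\<And>h. 0 < h \<Longrightarrow> h < \<delta> \<Longrightarrow> \<bar>f (x - h)\<bar> \<le> Fm"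
    and Fm: "\<bar>a\<bar> = Fm" "\<bar>b\<bar> \<le> Fm" "Fm > 0"
  shows False
proof (cases "a > 0")
  case True
  show False
  proof (cases "c * (a * (1 + k) - b) < 0")
    case True
    then obtain d' where d': "d' > 0" "\<And>h. h > 0 \<Longrightarrow> h < d' \<Longrightarrow> f x < f (x - h)"
      using DERIV_neg_dec_left[OF d] by blast
    define h where "h = min d' \<delta> / 2"
    have "h > 0" "h < d'" "h < \<delta>" using d' \<delta> unfolding h_def by auto
    then have "f x < f (x - h)" "\<bar>f (x - h)\<bar> \<le> Fm" using d' nb by auto
    then show False using fx Fm \<open>a > 0\<close> by auto
  next
    case False
    then have "a * (1 + k) - b \<le> 0" using c by (simp add: mult_less_0_iff not_less)
    moreover have "a * k > 0" using True k by auto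
    ultimately show False using Fm True by (auto simp: algebra_simps)
  qed
next
  case False
  then have a: "a < 0" using Fm by auto
  show False
  proof (cases "c * (a * (1 + k) - b) > 0")
    case True
    then obtain d' where d': "d' > 0" "\<And>h. h > 0 \<Longrightarrow> h < d' \<Longrightarrow> f (x - h) < f x"
      using DERIV_pos_inc_left[OF d] by blast
    define h where "h = min d' \<delta> / 2"
    have "h > 0" "h < d'" "h < \<delta>" using d' \<delta> unfolding h_def by auto
    then have "f (x - h) < f x" "\<bar>f (x - h)\<bar> \<le> Fm" using d' nb by auto
    then show False using fx Fm a by auto
  next
    case False
    then have "a * (1 + k) - b \<ge> 0" using c by (smt (verit) mult_neg_neg)
    moreover have "a * k < 0" using a k by (simp add: mult_neg_pos)
    ultimately show False using Fm a by (auto simp: algebra_simps)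
  qed
qed
lemma alg_g:
  fixes l q b W R a z :: real
  assumes "q \<noteq> 0"
  shows "(- l / 4 - (l / q) * b\<^sup>2 * W) * R + (R * (0 * z + l * a / q)) * W + l / 4
      = (- l / 4) * (R - 1) + (l / q) * (W * R) * (a - b\<^sup>2)"
  using assms by (simp add: field_simps)


lemma slice_u:
  assumes "open D" "f differentiable_on D" "(s,t) \<in> D"
  shows "((\<lambda>x. f (x,t)) has_real_derivative du f (s,t)) (at s)"
proof -
  have "f differentiable at (s,t)"
    using assms differentiable_on_eq_differentiable_at by blast
  moreover have "(\<lambda>x::real. (x,t)) differentiable at s"
    by (intro derivative_intros)
  ultimately have "(\<lambda>x. f (x,t)) differentiable at s"
    using differentiable_compose[of f "\<lambda>x::real. (x,t)" s UNIV] by auto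
  then show ?thesis
    unfolding du_def using DERIV_deriv_iff_real_differentiable by auto
qed

lemma slice_v:
  assumes "open D" "f differentiable_on D" "(s,t) \<in> D"
  shows "((\<lambda>x. f (s,x)) has_real_derivative dv f (s,t)) (at t)"
proof -
  have "f differentiable at (s,t)"
    using assms differentiable_on_eq_differentiable_at by blast
  moreover have "(\<lambda>x::real. (s,x)) differentiable at t"
    by (intro derivative_intros)
  ultimately have "(\<lambda>x. f (s,x)) differentiable at t"
    using differentiable_compose[of f "\<lambda>x::real. (s,x)" t UNIV] by auto
  then show ?thesis
    unfolding dv_def using DERIV_deriv_iff_real_differentiable by auto
qed

lemma box_dist:
  fixes a b x y d :: real
  assumes "0 \<le> x" "x \<le> d/3" "0 \<le> y" "y \<le> d/3" "d > 0"
  shows "dist (a+x, b+y) (a,b) < d"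
proof -
  have "dist (a+x, b+y) (a,b) = sqrt (x^2 + y^2)"
    by (simp add: dist_Pair_Pair dist_real_def)
  also have "\<dots> \<le> \<bar>x\<bar> + \<bar>y\<bar>" by (rule sqrt_sum_squares_le_sum_abs)
  also have "\<dots> < d" using assms by auto
  finally show ?thesis .
qed

lemma schwarz:
  assumes D: "open D" and C2: "C2_on D f" and p: "p \<in> D"
  shows "dv (du f) p = du (dv f) p"
proof (rule ccontr)
  assume ne: "dv (du f) p \<noteq> du (dv f) p"
  obtain a b where pab: "p = (a,b)" by (cases p)
  define e where "e = \<bar>dv (du f) p - du (dv f) p\<bar> / 2"
  have e: "e > 0" using ne unfolding e_def by auto
  have fd: "f differentiable_on D" and dud: "du f differentiable_on D" and dvd: "dv f differentiable_on D"
    and c1: "continuous_on D (du (dv f))" and c2: "continuous_on D (dv (du f))"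
    using C2 unfolding C2_on_def by auto
  have "continuous (at p) (du (dv f))" using c1 D p continuous_on_eq_continuous_at by blast
  then obtain d1 where d1: "d1 > 0" "\<And>x. dist x p < d1 \<Longrightarrow> dist (du (dv f) x) (du (dv f) p) < e"
    using e continuous_at_eps_delta by blast
  have "continuous (at p) (dv (du f))" using c2 D p continuous_on_eq_continuous_at by blast
  then obtain d2 where d2: "d2 > 0" "\<And>x. dist x p < d2 \<Longrightarrow> dist (dv (du f) x) (dv (du f) p) < e"
    using e continuous_at_eps_delta by blast
  obtain d3 where d3: "d3 > 0" "ball p d3 \<subseteq> D" using D p open_contains_ball by blast
  define d where "d = min d1 (min d2 d3)"
  have d: "d > 0" using d1 d2 d3 unfolding d_def by auto
  define h where "h = d/3"
  have h: "h > 0" using d unfolding h_def by auto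
  have box: "(a+x, b+y) \<in> D \<and> \<bar>du (dv f) (a+x, b+y) - du (dv f) p\<bar> < e
      \<and> \<bar>dv (du f) (a+x, b+y) - dv (du f) p\<bar> < e"
    if "0 \<le> x" "x \<le> h" "0 \<le> y" "y \<le> h" for x y
  proof -
    have dd: "dist (a+x, b+y) p < d" unfolding pab
      by (rule box_dist) (use that d in \<open>auto simp: h_def\<close>)
    then have "(a+x, b+y) \<in> ball p d3" using d_def by (auto simp: dist_commute)
    then show ?thesis using d3 d1(2)[of "(a+x,b+y)"] d2(2)[of "(a+x,b+y)"] dd
      by (auto simp: d_def dist_real_def)
  qed
  have inD: "(x, y) \<in> D" if "a \<le> x" "x \<le> a+h" "b \<le> y" "y \<le> b+h" for x y
    using box[of "x-a" "y-b"] that by auto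
  define \<Delta> where "\<Delta> = f (a+h, b+h) - f (a+h, b) - f (a, b+h) + f (a, b)"
  have der1: "((\<lambda>s. f (s, b+h) - f (s, b)) has_real_derivative du f (x, b+h) - du f (x, b)) (at x)"
    if "a \<le> x" "x \<le> a+h" for x
    using that h by (intro derivative_intros slice_u[OF D fd] inD) auto
  obtain \<xi> where \<xi>: "a < \<xi>" "\<xi> < a+h"
    "(f (a+h, b+h) - f (a+h, b)) - (f (a, b+h) - f (a, b)) = ((a+h) - a) * (du f (\<xi>, b+h) - du f (\<xi>, b))"
    using MVT2[of a "a+h" "\<lambda>s. f (s, b+h) - f (s, b)" "\<lambda>s. du f (s, b+h) - du f (s, b)", OF _ der1] h
    by auto
  have der2: "((\<lambda>t. du f (\<xi>, t)) has_real_derivative dv (du f) (\<xi>, y)) (at y)"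
    if "b \<le> y" "y \<le> b+h" for y
    using that h \<xi> by (intro slice_v[OF D dud] inD) auto
  obtain \<eta> where \<eta>: "b < \<eta>" "\<eta> < b+h"
    "du f (\<xi>, b+h) - du f (\<xi>, b) = ((b+h) - b) * dv (du f) (\<xi>, \<eta>)"
    using MVT2[of b "b+h" "\<lambda>t. du f (\<xi>, t)" "\<lambda>t. dv (du f) (\<xi>, t)", OF _ der2] h
    by auto
  have der3: "((\<lambda>t. f (a+h, t) - f (a, t)) has_real_derivative dv f (a+h, y) - dv f (a, y)) (at y)"
    if "b \<le> y" "y \<le> b+h" for y
    using that h by (intro derivative_intros slice_v[OF D fd] inD) auto
  obtain \<eta>' where \<eta>': "b < \<eta>'" "\<eta>' < b+h"
    "(f (a+h, b+h) - f (a, b+h)) - (f (a+h, b) - f (a, b)) = ((b+h) - b) * (dv f (a+h, \<eta>') - dv f (a, \<eta>'))"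
    using MVT2[of b "b+h" "\<lambda>t. f (a+h, t) - f (a, t)" "\<lambda>t. dv f (a+h, t) - dv f (a, t)", OF _ der3] h
    by auto
  have der4: "((\<lambda>s. dv f (s, \<eta>')) has_real_derivative du (dv f) (x, \<eta>')) (at x)"
    if "a \<le> x" "x \<le> a+h" for x
    using that h \<eta>' by (intro slice_u[OF D dvd] inD) auto
  obtain \<xi>' where \<xi>': "a < \<xi>'" "\<xi>' < a+h"
    "dv f (a+h, \<eta>') - dv f (a, \<eta>') = ((a+h) - a) * du (dv f) (\<xi>', \<eta>')"
    using MVT2[of a "a+h" "\<lambda>s. dv f (s, \<eta>')" "\<lambda>s. du (dv f) (s, \<eta>')", OF _ der4] h
    by auto
  have "h * h * dv (du f) (\<xi>, \<eta>) = h * h * du (dv f) (\<xi>', \<eta>')"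
    using \<xi>(3) \<eta>(3) \<eta>'(3) \<xi>'(3) by (auto simp: algebra_simps)
  then have eq: "dv (du f) (\<xi>, \<eta>) = du (dv f) (\<xi>', \<eta>')" using h by auto
  have b1: "\<bar>dv (du f) (\<xi>, \<eta>) - dv (du f) p\<bar> < e"
    using box[of "\<xi>-a" "\<eta>-b"] \<xi> \<eta> by auto
  have b2: "\<bar>du (dv f) (\<xi>', \<eta>') - du (dv f) p\<bar> < e"
    using box[of "\<xi>'-a" "\<eta>'-b"] \<xi>' \<eta>' by auto
  show False using b1 b2 eq e_def by (auto simp: abs_if split: if_splits)
qed

locale setting =
  fixes M eps :: real and l0 :: nat and D :: "(real \<times> real) set"
    and r Om ph :: "real \<times> real \<Rightarrow> real" and U V :: real
  assumes M: "M > 0" and eps: "0 < eps" "eps \<le> 1/10"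
    and ES: "ES_solution D r Om ph" and geo: "trapezoid_geometry D r l0 U V"
    and data: "near_schwarzschild_data M eps (curve D r l0 U V) r Om ph"
begin

abbreviation "T \<equiv> trapezoid D r l0 U V"
abbreviation "G \<equiv> curve D r l0 U V"
abbreviation "r0 \<equiv> inverse ((2::real) ^ l0)"
definition "E = T \<union> G"

lemma r0: "0 < r0" "r0 \<le> 1"
  using one_le_power[of "2::real" l0] by (auto simp: inverse_le_1_iff)

lemma Dopen: "open D" and C2r: "C2_on D r" and C2Om: "C2_on D Om" and C2ph: "C2_on D ph"
  using ES unfolding ES_solution_def by auto

lemma pos: "p \<in> D \<Longrightarrow> r p > 0" "p \<in> D \<Longrightarrow> Om p > 0"
  using ES unfolding ES_solution_def by auto

lemma eq1: "p \<in> D \<Longrightarrow> r p * du (dv r) p = - du r p * dv r p - (Om p)\<^sup>2 / 4"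
  and eq3: "p \<in> D \<Longrightarrow> r p * du (dv ph) p = - du r p * dv ph p - dv r p * du ph p"
  and eq4: "p \<in> D \<Longrightarrow> du (\<lambda>q. du r q / (Om q)\<^sup>2) p = - r p * (du ph p)\<^sup>2 / (Om p)\<^sup>2"
  and eq5: "p \<in> D \<Longrightarrow> dv (\<lambda>q. dv r q / (Om q)\<^sup>2) p = - r p * (dv ph p)\<^sup>2 / (Om p)\<^sup>2"
  using ES unfolding ES_solution_def by auto

lemma ED: "p \<in> E \<Longrightarrow> p \<in> D"
  unfolding E_def trapezoid_def curve_def by auto

lemma Er0: "p \<in> E \<Longrightarrow> r p \<le> r0"
  unfolding E_def trapezoid_def curve_def by auto

lemma Gr0: "p \<in> G \<Longrightarrow> r p = r0" "p \<in> G \<Longrightarrow> p \<in> D"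
  unfolding curve_def by auto

lemma Tr0: "p \<in> T \<Longrightarrow> r p < r0" "p \<in> T \<Longrightarrow> p \<in> D"
  unfolding trapezoid_def by auto

lemma dataG:
  assumes "p \<in> G"
  shows "\<bar>dv r p + M / r0\<bar> \<le> eps * M / r0" "\<bar>du r p + M / r0\<bar> \<le> eps * M / r0"
    "\<bar>(Om p)\<^sup>2 - 2 * M / r0\<bar> \<le> eps * M / r0" "\<bar>du ph p\<bar> \<le> eps / r0\<^sup>2" "\<bar>dv ph p\<bar> \<le> eps / r0\<^sup>2"
  using data assms Gr0[OF assms] unfolding near_schwarzschild_data_def by auto

lemma laG: "p \<in> G \<Longrightarrow> dv r p \<le> - (1-eps) * M / r0"
  using dataG(1)[of p] by (simp add: abs_le_iff diff_divide_distrib left_diff_distrib)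
lemma nuG: "p \<in> G \<Longrightarrow> du r p \<le> - (1-eps) * M / r0"
  using dataG(2)[of p] by (simp add: abs_le_iff diff_divide_distrib left_diff_distrib)
lemma laG': "p \<in> G \<Longrightarrow> dv r p \<ge> - (1+eps) * M / r0"
proof -
  assume p: "p \<in> G"
  have "- (1+eps) * M / r0 = -(M/r0) - eps*M/r0" by (simp add: diff_divide_distrib left_diff_distrib)
  then show ?thesis using dataG(1)[OF p] unfolding abs_le_iff by linarith
qed
lemma nuG': "p \<in> G \<Longrightarrow> du r p \<ge> - (1+eps) * M / r0"
proof -
  assume p: "p \<in> G"
  have "- (1+eps) * M / r0 = -(M/r0) - eps*M/r0" by (simp add: diff_divide_distrib left_diff_distrib)
  then show ?thesis using dataG(2)[OF p] unfolding abs_le_iff by linarith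
qed
lemma OmG: "p \<in> G \<Longrightarrow> (Om p)\<^sup>2 \<ge> (2-eps) * M / r0"
  using dataG(3)[of p] by (simp add: abs_le_iff diff_divide_distrib left_diff_distrib)

lemma neg: "p \<in> E \<Longrightarrow> du r p < 0 \<and> dv r p < 0"
proof -
  assume p: "p \<in> E"
  have "(1-eps) * M / r0 > 0" using M eps by auto
  have "p \<in> T \<or> p \<in> G" using p unfolding E_def by auto
  then show ?thesis
  proof
    assume "p \<in> T" then show ?thesis using geo unfolding trapezoid_geometry_def by blast
  next
    assume "p \<in> G" then show ?thesis using laG[of p] nuG[of p] \<open>(1-eps) * M / r0 > 0\<close>
      by linarith
  qed
qed

lemma useg:
  assumes "(u,v) \<in> E"
  shows "\<exists>u0\<le>u. (u0,v) \<in> G \<and> (\<forall>s. u0 \<le> s \<and> s \<le> u \<longrightarrow> (s,v) \<in> E)"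
proof (cases "(u,v) \<in> T")
  case True
  then obtain u0 where "u0 \<le> u" "(u0, v) \<in> G" "\<forall>s. u0 < s \<and> s \<le> u \<longrightarrow> (s, v) \<in> T"
    using geo unfolding trapezoid_geometry_def by blast
  then show ?thesis unfolding E_def by (metis UnI1 UnI2 order_le_less)
next
  case False
  then have "(u,v) \<in> G" using assms unfolding E_def by auto
  then show ?thesis by (intro exI[of _ u]) (auto simp: E_def)
qed

lemma vseg:
  assumes "(u,v) \<in> E"
  shows "\<exists>v0\<le>v. (u,v0) \<in> G \<and> (\<forall>t. v0 \<le> t \<and> t \<le> v \<longrightarrow> (u,t) \<in> E)"
proof (cases "(u,v) \<in> T")
  case True
  then obtain v0 where "v0 \<le> v" "(u, v0) \<in> G" "\<forall>s. v0 < s \<and> s \<le> v \<longrightarrow> (u, s) \<in> T"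
    using geo unfolding trapezoid_geometry_def by blast
  then show ?thesis unfolding E_def by (metis UnI1 UnI2 order_le_less)
next
  case False
  then have "(u,v) \<in> G" using assms unfolding E_def by auto
  then show ?thesis by (intro exI[of _ v]) (auto simp: E_def)
qed

lemma rdiff: "r differentiable_on D" and nud: "du r differentiable_on D" and lad: "dv r differentiable_on D"
  and phud: "du ph differentiable_on D" and phvd: "dv ph differentiable_on D"
  and Omd: "Om differentiable_on D"
  using C2r C2ph C2Om unfolding C2_on_def by auto

lemma Gd: "(\<lambda>q. dv r q / (Om q)\<^sup>2) differentiable_on D"
  unfolding differentiable_on_def
proof
  fix x assume x: "x \<in> D"
  have "dv r differentiable at x within D" "Om differentiable at x within D"
    using lad Omd x unfolding differentiable_on_def by auto
  then show "(\<lambda>q. dv r q / (Om q)\<^sup>2) differentiable at x within D"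
    using pos(2)[OF x] by (auto intro!: derivative_intros)
qed

lemma dr_u: "(s,t) \<in> D \<Longrightarrow> ((\<lambda>x. r (x,t)) has_real_derivative du r (s,t)) (at s)"
  by (rule slice_u[OF Dopen rdiff])
lemma dr_v: "(s,t) \<in> D \<Longrightarrow> ((\<lambda>x. r (s,x)) has_real_derivative dv r (s,t)) (at t)"
  by (rule slice_v[OF Dopen rdiff])
lemma dla_u: "(s,t) \<in> D \<Longrightarrow> ((\<lambda>x. dv r (x,t)) has_real_derivative du (dv r) (s,t)) (at s)"
  by (rule slice_u[OF Dopen lad])
lemma dnu_v: "(s,t) \<in> D \<Longrightarrow> ((\<lambda>x. du r (s,x)) has_real_derivative du (dv r) (s,t)) (at t)"
  using slice_v[OF Dopen nud] schwarz[OF Dopen C2r] by metis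
lemma dphv_u: "(s,t) \<in> D \<Longrightarrow> ((\<lambda>x. dv ph (x,t)) has_real_derivative du (dv ph) (s,t)) (at s)"
  by (rule slice_u[OF Dopen phvd])
lemma dphu_v: "(s,t) \<in> D \<Longrightarrow> ((\<lambda>x. du ph (s,x)) has_real_derivative du (dv ph) (s,t)) (at t)"
  using slice_v[OF Dopen phud] schwarz[OF Dopen C2ph] by metis
lemma dGv: "(s,t) \<in> D \<Longrightarrow> ((\<lambda>x. dv r (s,x) / (Om (s,x))\<^sup>2) has_real_derivative
     - r (s,t) * (dv ph (s,t))\<^sup>2 / (Om (s,t))\<^sup>2) (at t)"
  using slice_v[OF Dopen Gd, of s t] eq5[of "(s,t)"] by simp


lemma rla: assumes p: "p \<in> E" shows "r p * dv r p \<le> - (1-eps) * M"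
proof -
  obtain u v where pu: "p = (u,v)" by (cases p)
  obtain u0 where u0: "u0 \<le> u" "(u0,v) \<in> G" "\<And>s. u0 \<le> s \<Longrightarrow> s \<le> u \<Longrightarrow> (s,v) \<in> E"
    using useg[of u v] p pu by blast
  have "(\<lambda>x. r (x,v) * dv r (x,v)) u \<le> (\<lambda>x. r (x,v) * dv r (x,v)) u0"
  proof (rule DERIV_nonpos_imp_nonincreasing[OF u0(1)])
    fix x assume x: "u0 \<le> x" "x \<le> u"
    have xD: "(x,v) \<in> D" using ED u0(3)[OF x] by auto
    have d: "DERIV (\<lambda>x. r (x,v) * dv r (x,v)) x :> du r (x,v) * dv r (x,v) + du (dv r) (x,v) * r (x,v)"
      using DERIV_mult[OF dr_u[OF xD] dla_u[OF xD]] .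
    have "du r (x,v) * dv r (x,v) + du (dv r) (x,v) * r (x,v) = - (Om (x,v))\<^sup>2 / 4"
      using eq1[OF xD] by (simp add: algebra_simps)
    also have "\<dots> \<le> 0" by simp
    finally show "\<exists>y. DERIV (\<lambda>x. r (x,v) * dv r (x,v)) x :> y \<and> y \<le> 0" using d by blast
  qed
  moreover have "r (u0,v) * dv r (u0,v) \<le> - (1-eps) * M"
  proof -
    have "r (u0,v) * dv r (u0,v) \<le> r0 * (- (1-eps) * M / r0)"
      unfolding Gr0(1)[OF u0(2)] by (rule mult_left_mono[OF laG[OF u0(2)]]) (use r0 in auto)
    also have "\<dots> = - (1-eps) * M" using r0 by simp
    finally show ?thesis .
  qed
  ultimately show ?thesis using pu by simp
qed

lemma rnu: assumes p: "p \<in> E" shows "r p * du r p \<le> - (1-eps) * M"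
proof -
  obtain u v where pu: "p = (u,v)" by (cases p)
  obtain v0 where v0: "v0 \<le> v" "(u,v0) \<in> G" "\<And>t. v0 \<le> t \<Longrightarrow> t \<le> v \<Longrightarrow> (u,t) \<in> E"
    using vseg[of u v] p pu by blast
  have "(\<lambda>x. r (u,x) * du r (u,x)) v \<le> (\<lambda>x. r (u,x) * du r (u,x)) v0"
  proof (rule DERIV_nonpos_imp_nonincreasing[OF v0(1)])
    fix x assume x: "v0 \<le> x" "x \<le> v"
    have xD: "(u,x) \<in> D" using ED v0(3)[OF x] by auto
    have d: "DERIV (\<lambda>x. r (u,x) * du r (u,x)) x :> dv r (u,x) * du r (u,x) + du (dv r) (u,x) * r (u,x)"
      using DERIV_mult[OF dr_v[OF xD] dnu_v[OF xD]] .
    have "dv r (u,x) * du r (u,x) + du (dv r) (u,x) * r (u,x) = - (Om (u,x))\<^sup>2 / 4"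
      using eq1[OF xD] by (simp add: algebra_simps)
    also have "\<dots> \<le> 0" by simp
    finally show "\<exists>y. DERIV (\<lambda>x. r (u,x) * du r (u,x)) x :> y \<and> y \<le> 0" using d by blast
  qed
  moreover have "r (u,v0) * du r (u,v0) \<le> - (1-eps) * M"
  proof -
    have "r (u,v0) * du r (u,v0) \<le> r0 * (- (1-eps) * M / r0)"
      unfolding Gr0(1)[OF v0(2)] by (rule mult_left_mono[OF nuG[OF v0(2)]]) (use r0 in auto)
    also have "\<dots> = - (1-eps) * M" using r0 by simp
    finally show ?thesis .
  qed
  ultimately show ?thesis using pu by simp
qed


definition "al p = r p * du ph p / du r p"
definition "be p = r p * dv ph p / dv r p"
definition "Wf p = r p * du r p * (dv r p / (Om p)\<^sup>2)"

lemma dal: assumes pE: "(s,t) \<in> E"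
  shows "DERIV (\<lambda>x. al (s,x)) t :> (dv r (s,t) / r (s,t)) *
     (al (s,t) * (1 + (Om (s,t))\<^sup>2 / (4 * du r (s,t) * dv r (s,t))) - be (s,t))"
proof -
  have pD: "(s,t) \<in> D" using ED pE by auto
  have ne: "r (s,t) \<noteq> 0" "du r (s,t) \<noteq> 0" "dv r (s,t) \<noteq> 0"
    using pos(1)[OF pD] neg[OF pE] by auto
  have d: "DERIV (\<lambda>x. r (s,x) * du ph (s,x) / du r (s,x)) t :>
     ((dv r (s,t) * du ph (s,t) + du (dv ph) (s,t) * r (s,t)) * du r (s,t)
        - r (s,t) * du ph (s,t) * du (dv r) (s,t)) / (du r (s,t) * du r (s,t))"
    using DERIV_divide[OF DERIV_mult[OF dr_v[OF pD] dphu_v[OF pD]] dnu_v[OF pD]] ne by simp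
  have e: "((dv r (s,t) * du ph (s,t) + du (dv ph) (s,t) * r (s,t)) * du r (s,t)
        - r (s,t) * du ph (s,t) * du (dv r) (s,t)) / (du r (s,t) * du r (s,t))
     = (dv r (s,t) / r (s,t)) *
     ((r (s,t) * du ph (s,t) / du r (s,t)) * (1 + (Om (s,t))\<^sup>2 / (4 * du r (s,t) * dv r (s,t)))
       - r (s,t) * dv ph (s,t) / dv r (s,t))"
    by (rule alg_al[OF ne(1,2,3)]) (use eq1[OF pD] eq3[OF pD] in auto)
  show ?thesis using d unfolding e al_def be_def by simp
qed

lemma dbe: assumes pE: "(s,t) \<in> E"
  shows "DERIV (\<lambda>x. be (x,t)) s :> (du r (s,t) / r (s,t)) *
     (be (s,t) * (1 + (Om (s,t))\<^sup>2 / (4 * du r (s,t) * dv r (s,t))) - al (s,t))"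
proof -
  have pD: "(s,t) \<in> D" using ED pE by auto
  have ne: "r (s,t) \<noteq> 0" "du r (s,t) \<noteq> 0" "dv r (s,t) \<noteq> 0"
    using pos(1)[OF pD] neg[OF pE] by auto
  have d: "DERIV (\<lambda>x. r (x,t) * dv ph (x,t) / dv r (x,t)) s :>
     ((du r (s,t) * dv ph (s,t) + du (dv ph) (s,t) * r (s,t)) * dv r (s,t)
        - r (s,t) * dv ph (s,t) * du (dv r) (s,t)) / (dv r (s,t) * dv r (s,t))"
    using DERIV_divide[OF DERIV_mult[OF dr_u[OF pD] dphv_u[OF pD]] dla_u[OF pD]] ne by simp
  have e: "((du r (s,t) * dv ph (s,t) + du (dv ph) (s,t) * r (s,t)) * dv r (s,t)
        - r (s,t) * dv ph (s,t) * du (dv r) (s,t)) / (dv r (s,t) * dv r (s,t))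
     = (du r (s,t) / r (s,t)) *
     ((r (s,t) * dv ph (s,t) / dv r (s,t)) * (1 + (Om (s,t))\<^sup>2 / (4 * du r (s,t) * dv r (s,t)))
       - r (s,t) * du ph (s,t) / du r (s,t))"
    by (rule alg_be[OF ne(1,2,3)]) (use eq1[OF pD] eq3[OF pD] in auto)
  show ?thesis using d unfolding e al_def be_def by simp
qed

lemma dW: assumes pE: "(s,t) \<in> E"
  shows "DERIV (\<lambda>x. Wf (s,x)) t :> - dv r (s,t) / 4 - (dv r (s,t) / r (s,t)) * (be (s,t))\<^sup>2 * Wf (s,t)"
proof -
  have pD: "(s,t) \<in> D" using ED pE by auto
  have ne: "r (s,t) \<noteq> 0" "du r (s,t) \<noteq> 0" "dv r (s,t) \<noteq> 0" "Om (s,t) \<noteq> 0"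
    using pos[OF pD] neg[OF pE] by auto
  have d: "DERIV (\<lambda>x. r (s,x) * du r (s,x) * (dv r (s,x) / (Om (s,x))\<^sup>2)) t :>
     (dv r (s,t) * du r (s,t) + du (dv r) (s,t) * r (s,t)) * (dv r (s,t) / (Om (s,t))\<^sup>2)
      + (- r (s,t) * (dv ph (s,t))\<^sup>2 / (Om (s,t))\<^sup>2) * (r (s,t) * du r (s,t))"
    using DERIV_mult[OF DERIV_mult[OF dr_v[OF pD] dnu_v[OF pD]] dGv[OF pD]] by simp
  have e: "(dv r (s,t) * du r (s,t) + du (dv r) (s,t) * r (s,t)) * (dv r (s,t) / (Om (s,t))\<^sup>2)
      + (- r (s,t) * (dv ph (s,t))\<^sup>2 / (Om (s,t))\<^sup>2) * (r (s,t) * du r (s,t))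
     = - dv r (s,t) / 4 - (dv r (s,t) / r (s,t)) * (be (s,t))\<^sup>2 *
        (r (s,t) * du r (s,t) * (dv r (s,t) / (Om (s,t))\<^sup>2))"
    by (rule alg_W[OF ne]) (use eq1[OF pD] in \<open>auto simp: be_def\<close>)
  show ?thesis using d unfolding e Wf_def by simp
qed


definition "K = 2 * eps / M"

lemma Topen: "open T"
proof -
  have "T = (D \<inter> r -` {..<r0}) \<inter> ({x. fst x < U} \<inter> {x. snd x < V})"
    unfolding trapezoid_def by auto
  moreover have "open (D \<inter> r -` {..<r0})"
    using continuous_open_preimage[OF differentiable_imp_continuous_on[OF rdiff] Dopen] by auto
  moreover have "open {x::real\<times>real. fst x < U}" "open {x::real\<times>real. snd x < V}"
    by (auto intro!: open_Collect_less continuous_intros)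
  ultimately show ?thesis by auto
qed

lemma la_le: assumes p: "p \<in> E" shows "dv r p \<le> - ((1-eps) * M / r0)"
proof -
  have rp: "r p > 0" "r p \<le> r0" using pos(1)[OF ED[OF p]] Er0[OF p] by auto
  have "dv r p \<le> - (1-eps) * M / r p" using rla[OF p] rp by (simp add: pos_le_divide_eq mult.commute)
  moreover have "(1-eps) * M / r0 \<le> (1-eps) * M / r p"
    using rp eps M by (intro divide_left_mono) auto
  moreover have "- (1-eps) * M / r p = - ((1-eps) * M / r p)" by (simp only: minus_divide_left mult_minus_left)
  ultimately show ?thesis by linarith
qed

lemma albeG: assumes p: "p \<in> G" shows "\<bar>al p\<bar> \<le> K" "\<bar>be p\<bar> \<le> K"
proof -
  have rp: "r p = r0" using Gr0[OF p] by simp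
  have Mr: "M / (2 * r0) \<le> (1-eps) * M / r0" using eps M r0 by (simp add: field_simps)
  have Mr0: "M / (2 * r0) > 0" using M r0 by simp
  have nn: "\<bar>du r p\<bar> \<ge> M / (2 * r0)" using nuG[OF p] Mr by linarith
  have ln: "\<bar>dv r p\<bar> \<ge> M / (2 * r0)" using laG[OF p] Mr by linarith
  have y: "r0 * (eps / r0\<^sup>2) / (M / (2 * r0)) = K" using r0 M by (simp add: K_def field_simps power2_eq_square)
  have "\<bar>al p\<bar> = r0 * \<bar>du ph p\<bar> / \<bar>du r p\<bar>" using rp r0 by (simp add: al_def abs_mult abs_divide)
  also have "\<dots> \<le> r0 * (eps / r0\<^sup>2) / (M / (2 * r0))"
    using dataG(4)[OF p] r0 eps Mr0 nn by (intro frac_le mult_left_mono) auto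
  finally show "\<bar>al p\<bar> \<le> K" using y by simp
  have "\<bar>be p\<bar> = r0 * \<bar>dv ph p\<bar> / \<bar>dv r p\<bar>" using rp r0 by (simp add: be_def abs_mult abs_divide)
  also have "\<dots> \<le> r0 * (eps / r0\<^sup>2) / (M / (2 * r0))"
    using dataG(5)[OF p] r0 eps Mr0 ln by (intro frac_le mult_left_mono) auto
  finally show "\<bar>be p\<bar> \<le> K" using y by simp
qed

lemma al_cont: "continuous_on E al" and be_cont: "continuous_on E be"
proof -
  have sub: "E \<subseteq> D" using ED by auto
  have c: "continuous_on E r" "continuous_on E (du r)" "continuous_on E (dv r)"
    "continuous_on E (du ph)" "continuous_on E (dv ph)"
    using continuous_on_subset[OF differentiable_imp_continuous_on sub] rdiff nud lad phud phvd by auto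
  show "continuous_on E al" unfolding al_def
    by (intro continuous_on_divide continuous_on_mult c) (auto dest: neg)
  show "continuous_on E be" unfolding be_def
    by (intro continuous_on_divide continuous_on_mult c) (auto dest: neg)
qed


lemma TG_disj: "p \<in> T \<Longrightarrow> p \<notin> G"
  using Tr0 Gr0 by fastforce

lemma TE: "p \<in> T \<Longrightarrow> p \<in> E" unfolding E_def by auto

lemma r_mono_v:
  assumes "t \<le> t'" "\<And>y. t \<le> y \<Longrightarrow> y \<le> t' \<Longrightarrow> (s,y) \<in> E"
  shows "r (s,t') \<le> r (s,t)"
proof (rule DERIV_nonpos_imp_nonincreasing[OF assms(1)])
  fix y assume y: "t \<le> y" "y \<le> t'"
  have yE: "(s,y) \<in> E" using assms(2) y by auto
  show "\<exists>z. DERIV (\<lambda>x. r (s,x)) y :> z \<and> z \<le> 0"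
    using dr_v[OF ED[OF yE]] neg[OF yE] by (intro exI[of _ "dv r (s,y)"]) auto
qed

lemma albe_bound: assumes qE: "q \<in> E" shows "\<bar>al q\<bar> \<le> K \<and> \<bar>be q\<bar> \<le> K"
proof (cases "q \<in> G")
  case True
  then show ?thesis using albeG by auto
next
  case False
  then have qT: "q \<in> T" using qE unfolding E_def by auto
  obtain u v where quv: "q = (u,v)" by (cases q)
  obtain u0 where u0: "u0 \<le> u" "(u0,v) \<in> G" "\<And>s. u0 \<le> s \<Longrightarrow> s \<le> u \<Longrightarrow> (s,v) \<in> E"
    using useg[of u v] qE quv by blast
  define P where "P = {x. u0 \<le> fst x \<and> fst x \<le> u \<and> snd x \<le> v \<and> (\<forall>t. snd x \<le> t \<and> t \<le> v \<longrightarrow> (fst x, t) \<in> E)}"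
  have PE: "x \<in> P \<Longrightarrow> x \<in> E" for x unfolding P_def by (cases x) auto
  have qP: "q \<in> P" unfolding P_def quv using u0 qE quv by auto
  define c where "c = (1-eps) * M / r0"
  have c: "c > 0" unfolding c_def using eps M r0 by auto
  have vlen: "v - snd x \<le> r0 / c" if xP: "x \<in> P" for x
  proof -
    obtain s t where x: "x = (s,t)" by (cases x)
    have seg: "(s,y) \<in> E" if "t \<le> y" "y \<le> v" for y using xP that unfolding P_def x by auto
    have tv: "t \<le> v" using xP unfolding P_def x by auto
    have "(\<lambda>y. r (s,y) + c * y) v \<le> (\<lambda>y. r (s,y) + c * y) t"
    proof (rule DERIV_nonpos_imp_nonincreasing[OF tv])
      fix y assume y: "t \<le> y" "y \<le> v"
      have yE: "(s,y) \<in> E" using seg y by auto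
      have "DERIV (\<lambda>y. r (s,y) + c * y) y :> dv r (s,y) + c * 1"
        by (intro DERIV_add dr_v[OF ED[OF yE]] DERIV_cmult DERIV_ident)
      moreover have "dv r (s,y) + c * 1 \<le> 0" using la_le[OF yE] unfolding c_def by simp
      ultimately show "\<exists>z. DERIV (\<lambda>y. r (s,y) + c * y) y :> z \<and> z \<le> 0" by blast
    qed
    moreover have "r (s,t) \<le> r0" "r (s,v) > 0"
      using Er0[OF seg[of t]] pos(1)[OF ED[OF seg[of v]]] tv by auto
    ultimately have "c * (v - t) \<le> r0" by (simp add: algebra_simps)
    then show ?thesis using c x by (simp add: pos_le_divide_eq mult.commute)
  qed
  have bdd: "bounded P"
  proof (rule bounded_subset)
    show "bounded ({u0..u} \<times> {v - r0/c..v})" by (intro bounded_Times) auto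
    show "P \<subseteq> {u0..u} \<times> {v - r0/c..v}"
    proof
      fix x assume xP: "x \<in> P"
      then show "x \<in> {u0..u} \<times> {v - r0/c..v}" using vlen[OF xP] unfolding P_def
        by (cases x) auto
    qed
  qed
  have cl: "closed P"
    unfolding closed_sequential_limits
  proof (intro allI impI, elim conjE)
    fix X l assume XP: "\<forall>n. X n \<in> P" and Xl: "X \<longlonglongrightarrow> l"
    obtain ss tt where l: "l = (ss,tt)" by (cases l)
    have f1: "(\<lambda>n. fst (X n)) \<longlonglongrightarrow> ss" using tendsto_fst[OF Xl] l by simp
    have f2: "(\<lambda>n. snd (X n)) \<longlonglongrightarrow> tt" using tendsto_snd[OF Xl] l by simp
    have ss: "u0 \<le> ss" "ss \<le> u"
      using LIMSEQ_le_const[OF f1, of u0] LIMSEQ_le_const2[OF f1, of u] XP unfolding P_def by auto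
    have ttv: "tt \<le> v" using LIMSEQ_le_const2[OF f2, of v] XP unfolding P_def by auto
    have ssv: "(ss,v) \<in> E" using u0(3) ss by auto
    obtain v0 where v0: "v0 \<le> v" "(ss,v0) \<in> G" "\<And>t. v0 \<le> t \<Longrightarrow> t \<le> v \<Longrightarrow> (ss,t) \<in> E"
      using vseg[OF ssv] by blast
    have "v0 \<le> tt"
    proof (rule ccontr)
      assume "\<not> v0 \<le> tt"
      then have ttv0: "tt < v0" by simp
      have v0D: "(ss,v0) \<in> D" using Gr0(2)[OF v0(2)] .
      have lneg: "dv r (ss,v0) < 0" using neg[of "(ss,v0)"] v0(2) unfolding E_def by auto
      obtain d where d: "d > 0" "\<And>h. h > 0 \<Longrightarrow> h < d \<Longrightarrow> r (ss,v0) < r (ss, v0 - h)"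
        using DERIV_neg_dec_left[OF dr_v[OF v0D] lneg] by blast
      obtain \<delta> where \<delta>: "\<delta> > 0" "ball (ss,v0) \<delta> \<subseteq> D" using Dopen v0D open_contains_ball by blast
      define h where "h = min d (min \<delta> (v0 - tt)) / 2"
      have h: "h > 0" "h < d" "h < \<delta>" "h < v0 - tt" using d \<delta> ttv0 unfolding h_def by auto
      define \<tau> where "\<tau> = v0 - h"
      have \<tau>D: "(ss,\<tau>) \<in> D" using \<delta>(2) h unfolding \<tau>_def by (auto simp: dist_Pair_Pair dist_real_def)
      have r\<tau>: "r (ss,\<tau>) > r0" using d(2)[OF h(1,2)] Gr0(1)[OF v0(2)] unfolding \<tau>_def by simp
      have "isCont r (ss,\<tau>)"
        using differentiable_imp_continuous_on[OF rdiff] Dopen \<tau>D continuous_on_eq_continuous_at by blast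
      moreover have "(\<lambda>n. (fst (X n), \<tau>)) \<longlonglongrightarrow> (ss,\<tau>)" by (intro tendsto_intros f1)
      ultimately have "(\<lambda>n. r (fst (X n), \<tau>)) \<longlonglongrightarrow> r (ss,\<tau>)" by (rule isCont_tendsto_compose)
      then have ev1: "eventually (\<lambda>n. r (fst (X n), \<tau>) > r0) sequentially"
        using r\<tau> order_tendstoD(1) by blast
      have ev2: "eventually (\<lambda>n. snd (X n) < \<tau>) sequentially"
        using order_tendstoD(2)[OF f2, of "v0 - h"] h unfolding \<tau>_def by simp
      have "eventually (\<lambda>n. False) sequentially"
      proof (rule eventually_mono[OF eventually_conj[OF ev1 ev2]])
        fix n assume n: "r0 < r (fst (X n), \<tau>) \<and> snd (X n) < \<tau>"
        have "\<tau> \<le> v" using h v0 unfolding \<tau>_def by auto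
        then have "(fst (X n), \<tau>) \<in> E" using XP n unfolding P_def by auto
        then show False using Er0 n by force
      qed
      then show False by simp
    qed
    then show "l \<in> P" unfolding P_def l using ss ttv v0(3) by auto
  qed
  have cpt: "compact P" using bdd cl compact_eq_bounded_closed by blast
  define F where "F x = max \<bar>al x\<bar> \<bar>be x\<bar>" for x
  have PsE: "P \<subseteq> E" using PE by auto
  have Fc: "continuous_on P F"
    unfolding F_def using continuous_on_subset[OF al_cont PsE] continuous_on_subset[OF be_cont PsE]
    by (intro continuous_intros) auto
  obtain x1 where x1: "x1 \<in> P" "\<And>y. y \<in> P \<Longrightarrow> F y \<le> F x1"
    using continuous_attains_sup[OF cpt _ Fc] qP by blast
  have "F x1 \<le> K"
  proof (rule ccontr)
    assume "\<not> F x1 \<le> K"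
    then have FK: "F x1 > K" by simp
    have K0: "K > 0" unfolding K_def using eps M by auto
    obtain s1 t1 where x1st: "x1 = (s1,t1)" by (cases x1)
    have x1E: "x1 \<in> E" using PE x1 by auto
    have x1G: "x1 \<notin> G" using albeG FK unfolding F_def by fastforce
    have x1T: "x1 \<in> T" using x1E x1G unfolding E_def by auto
    have x1D: "(s1,t1) \<in> D" using Tr0(2) x1T x1st by auto
    have seg1: "(s1,y) \<in> E" if "t1 \<le> y" "y \<le> v" for y
      using x1 that unfolding P_def x1st by auto
    have t1v: "t1 \<le> v" and s1r: "u0 \<le> s1" "s1 \<le> u" using x1 unfolding P_def x1st by auto
    obtain v0' where v0': "v0' \<le> t1" "(s1,v0') \<in> G" "\<And>y. v0' < y \<Longrightarrow> y \<le> t1 \<Longrightarrow> (s1,y) \<in> T"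
      using geo x1T x1st unfolding trapezoid_geometry_def by blast
    have v0'lt: "v0' < t1" using v0' x1G x1st by (cases "v0' = t1") auto
    have s1gt: "u0 < s1"
    proof (rule ccontr)
      assume "\<not> u0 < s1"
      then have "s1 = u0" using s1r by simp
      then have "r (u0,v) \<le> r (u0,t1)" using r_mono_v[OF t1v, of u0] seg1 by auto
      then show False using Gr0(1)[OF u0(2)] Tr0(1)[OF x1T] x1st \<open>s1 = u0\<close> by simp
    qed
    have N1: "(s1, t1 - h) \<in> P" if h: "0 < h" "h < t1 - v0'" for h
    proof -
      have "(s1, y) \<in> E" if "t1 - h \<le> y" "y \<le> v" for y
      proof (cases "y \<le> t1")
        case True
        then show ?thesis using v0'(3)[of y] that h TE by auto
      next
        case False
        then show ?thesis using seg1 that by auto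
      qed
      then show ?thesis unfolding P_def using s1r t1v h by auto
    qed
    \<comment> \<open>left neighbourhood in u, via a tube around the segment\<close>
    define S where "S = (\<lambda>y. (s1,y)) ` {t1..v}"
    have Scpt: "compact S" unfolding S_def by (intro compact_continuous_image continuous_intros) auto
    have ST: "S \<subseteq> T"
    proof
      fix z assume "z \<in> S"
      then obtain y where y: "t1 \<le> y" "y \<le> v" "z = (s1,y)" unfolding S_def by auto
      have "r (s1,y) \<le> r (s1,t1)" using r_mono_v[OF y(1), of s1] seg1 y by auto
      then have "(s1,y) \<notin> G" using Gr0(1) Tr0(1)[OF x1T] x1st by force
      then show "z \<in> T" using seg1[OF y(1,2)] y(3) unfolding E_def by auto
    qed
    obtain e where e: "e > 0" "(\<Union>x\<in>S. ball x e) \<subseteq> T"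
      using compact_subset_open_imp_ball_epsilon_subset[OF Scpt Topen ST] by blast
    have N2: "(s1 - h, t1) \<in> P" if "0 < h" "h < min e (s1 - u0)" for h
    proof -
      have "(s1 - h, y) \<in> T" if "t1 \<le> y" "y \<le> v" for y
      proof -
        have "(s1,y) \<in> S" unfolding S_def using that by auto
        moreover have "(s1 - h, y) \<in> ball (s1,y) e"
          using \<open>0 < h\<close> \<open>h < min e (s1 - u0)\<close> by (auto simp: dist_Pair_Pair dist_real_def)
        ultimately show ?thesis using e(2) by blast
      qed
      then show ?thesis unfolding P_def using that s1r t1v TE by auto
    qed
    have Fx1: "F x1 > 0" using FK K0 by simp
    have rpos: "r (s1,t1) > 0" using pos(1)[OF x1D] .
    have nl: "du r (s1,t1) < 0" "dv r (s1,t1) < 0" using neg[OF x1E] x1st by auto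
    define k where "k = (Om (s1,t1))\<^sup>2 / (4 * du r (s1,t1) * dv r (s1,t1))"
    have k: "k > 0" unfolding k_def using nl pos(2)[OF x1D]
      by (intro divide_pos_pos) (auto simp: mult_neg_neg)
    show False
    proof (cases "\<bar>al x1\<bar> = F x1")
      case True
      show False
      proof (rule max_contra[OF dal[OF x1E[unfolded x1st], folded k_def]])
        show "dv r (s1,t1) / r (s1,t1) < 0" using nl rpos by (simp add: divide_neg_pos)
        show "k > 0" by (rule k)
        show "al (s1,t1) = al (s1,t1)" ..
        show "t1 - v0' > 0" using v0'lt by simp
        show "\<bar>al (s1, t1 - h)\<bar> \<le> F x1" if "0 < h" "h < t1 - v0'" for h
          using x1(2)[OF N1[OF that]] unfolding F_def by auto
        show "\<bar>al (s1,t1)\<bar> = F x1" using True x1st by simp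
        show "\<bar>be (s1,t1)\<bar> \<le> F x1" unfolding F_def x1st by simp
        show "F x1 > 0" by (rule Fx1)
      qed
    next
      case False
      then have bF: "\<bar>be x1\<bar> = F x1" unfolding F_def by (auto simp: max_def split: if_splits)
      show False
      proof (rule max_contra[OF dbe[OF x1E[unfolded x1st], folded k_def]])
        show "du r (s1,t1) / r (s1,t1) < 0" using nl rpos by (simp add: divide_neg_pos)
        show "k > 0" by (rule k)
        show "be (s1,t1) = be (s1,t1)" ..
        show "min e (s1 - u0) > 0" using e s1gt by simp
        show "\<bar>be (s1 - h, t1)\<bar> \<le> F x1" if "0 < h" "h < min e (s1 - u0)" for h
          using x1(2)[OF N2[OF that]] unfolding F_def by auto
        show "\<bar>be (s1,t1)\<bar> = F x1" using bF x1st by simp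
        show "\<bar>al (s1,t1)\<bar> \<le> F x1" unfolding F_def x1st by simp
        show "F x1 > 0" by (rule Fx1)
      qed
    qed
  qed
  then have "F q \<le> K" using x1(2)[OF qP] by simp
  then show ?thesis unfolding F_def by simp
qed


lemma Wpos: "p \<in> E \<Longrightarrow> Wf p > 0"
proof -
  assume pE: "p \<in> E"
  have "r p > 0" "Om p > 0" using pos[OF ED[OF pE]] by auto
  moreover have "du r p < 0" "dv r p < 0" using neg[OF pE] by auto
  ultimately have "(r p * (- du r p)) * ((- dv r p) / (Om p)\<^sup>2) > 0"
    by (intro mult_pos_pos divide_pos_pos) auto
  then show ?thesis unfolding Wf_def by simp
qed

lemma WG: assumes p: "p \<in> G" shows "Wf p \<le> M"
proof -
  have pE: "p \<in> E" using p unfolding E_def by auto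
  have Om0: "(Om p)\<^sup>2 > 0" using pos(2)[OF ED[OF pE]] by simp
  have mm: "- (1+eps) * M / r0 = - ((1+eps) * M / r0)" by (simp only: minus_divide_left mult_minus_left)
  have n1: "0 \<le> - du r p" "- du r p \<le> (1+eps) * M / r0" using neg[OF pE] nuG'[OF p] mm by linarith+
  have l1: "0 \<le> - dv r p" "- dv r p \<le> (1+eps) * M / r0" using neg[OF pE] laG'[OF p] mm by linarith+
  have nl: "du r p * dv r p \<le> ((1+eps) * M / r0) * ((1+eps) * M / r0)"
    using mult_mono[OF n1(2) l1(2)] n1 l1 by simp
  have nl0: "0 \<le> du r p * dv r p" using n1 l1 by (simp add: zero_le_mult_iff)
  have Om: "(2-eps) * M / r0 \<le> (Om p)\<^sup>2" using OmG[OF p] .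
  have Om1: "(2-eps) * M / r0 > 0" using eps M r0 by simp
  have "Wf p = r0 * (du r p * dv r p) / (Om p)\<^sup>2" unfolding Wf_def Gr0(1)[OF p] by simp
  also have "\<dots> \<le> r0 * (((1+eps) * M / r0) * ((1+eps) * M / r0)) / ((2-eps) * M / r0)"
  proof (rule frac_le)
    show "0 \<le> r0 * (((1+eps) * M / r0) * ((1+eps) * M / r0))" using r0 by simp
    show "r0 * (du r p * dv r p) \<le> r0 * (((1+eps) * M / r0) * ((1+eps) * M / r0))"
      using r0 nl by (intro mult_left_mono) auto
  qed (use Om Om1 in auto)
  also have "\<dots> = (1+eps)^2 * M / (2 - eps)" using r0 M eps by (simp add: field_simps power2_eq_square)
  also have "\<dots> \<le> M"
  proof -
    have ee: "eps * eps \<le> eps * 1" using eps by (intro mult_left_mono) auto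
    have "(1+eps)^2 = 1 + 2*eps + eps*eps" by (simp add: power2_eq_square algebra_simps)
    then have "(1+eps)^2 \<le> 2 - eps" using eps ee by linarith
    then have "(1+eps)^2 * M \<le> (2 - eps) * M" using M by (intro mult_right_mono) auto
    then show ?thesis using eps by (simp add: divide_le_eq mult.commute)
  qed
  finally show ?thesis .
qed

lemma W_bound: assumes qT: "q \<in> T" shows "Wf q * r q powr (K\<^sup>2) \<le> M + 1/4"
proof -
  obtain u v where quv: "q = (u,v)" by (cases q)
  have qE: "q \<in> E" using TE qT by auto
  obtain v0 where v0: "v0 \<le> v" "(u,v0) \<in> G" "\<And>t. v0 \<le> t \<Longrightarrow> t \<le> v \<Longrightarrow> (u,t) \<in> E"
    using vseg[of u v] qE quv by blast
  define a where "a = K\<^sup>2"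
  have a0: "a \<ge> 0" unfolding a_def by simp
  define g where "g y = Wf (u,y) * r (u,y) powr a + r (u,y) / 4" for y
  have "g v \<le> g v0"
  proof (rule DERIV_nonpos_imp_nonincreasing[OF v0(1)])
    fix y assume y: "v0 \<le> y" "y \<le> v"
    have yE: "(u,y) \<in> E" using v0(3) y by auto
    have yD: "(u,y) \<in> D" using ED yE by auto
    have rp: "r (u,y) > 0" using pos(1)[OF yD] .
    have d: "DERIV g y :> (- dv r (u,y) / 4 - (dv r (u,y) / r (u,y)) * (be (u,y))\<^sup>2 * Wf (u,y)) * r (u,y) powr a
        + (r (u,y) powr a * (0 * ln (r (u,y)) + dv r (u,y) * a / r (u,y))) * Wf (u,y) + dv r (u,y) / 4"
      unfolding g_def
      by (intro DERIV_add DERIV_mult dW[OF yE] DERIV_powr[OF dr_v[OF yD] rp] DERIV_const DERIV_cdivide[OF dr_v[OF yD], of 4, simplified])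
    define R where "R = r (u,y) powr a"
    have R: "R > 0" "R \<le> 1" unfolding R_def using rp Er0[OF yE] r0 a0
      by (auto intro!: powr_le1)
    have la: "dv r (u,y) < 0" using neg[OF yE] by simp
    have W0: "Wf (u,y) > 0" using Wpos[OF yE] .
    have "\<bar>be (u,y)\<bar>^2 \<le> K^2" using albe_bound[OF yE] by (intro power_mono) auto
    then have be2: "(be (u,y))\<^sup>2 \<le> a" unfolding a_def by simp
    have eq: "(- dv r (u,y) / 4 - (dv r (u,y) / r (u,y)) * (be (u,y))\<^sup>2 * Wf (u,y)) * R
        + (R * (0 * ln (r (u,y)) + dv r (u,y) * a / r (u,y))) * Wf (u,y) + dv r (u,y) / 4
        = (- dv r (u,y) / 4) * (R - 1) + (dv r (u,y) / r (u,y)) * (Wf (u,y) * R) * (a - (be (u,y))\<^sup>2)"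
      by (rule alg_g) (use rp in simp)
    have t1: "(- dv r (u,y) / 4) * (R - 1) \<le> 0" using la R by (intro mult_nonneg_nonpos) auto
    have t2: "(dv r (u,y) / r (u,y)) * (Wf (u,y) * R) * (a - (be (u,y))\<^sup>2) \<le> 0"
    proof -
      have c1: "dv r (u,y) / r (u,y) \<le> 0" using la rp by (simp add: divide_nonpos_pos)
      have c2: "Wf (u,y) * R \<ge> 0" using W0 R by simp
      have c3: "a - (be (u,y))\<^sup>2 \<ge> 0" using be2 by simp
      show ?thesis using mult_nonpos_nonneg[OF mult_nonpos_nonneg[OF c1 c2] c3] .
    qed
    have d2: "DERIV g y :> (- dv r (u,y) / 4) * (R - 1) + (dv r (u,y) / r (u,y)) * (Wf (u,y) * R) * (a - (be (u,y))\<^sup>2)"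
      using d[folded R_def] unfolding eq .
    show "\<exists>z. DERIV g y :> z \<and> z \<le> 0" by (rule exI, rule conjI[OF d2]) (use t1 t2 in linarith)
  qed
  moreover have "g v0 \<le> M + 1/4"
  proof -
    have "r0 powr a \<le> 1" using r0 a0 by (intro powr_le1) auto
    then have "Wf (u,v0) * r0 powr a \<le> Wf (u,v0)"
      using Wpos[of "(u,v0)"] v0(2) unfolding E_def by (intro mult_left_le) auto
    then show ?thesis unfolding g_def Gr0(1)[OF v0(2)] using WG[OF v0(2)] r0 by simp
  qed
  moreover have "r q > 0" using pos(1) Tr0(2)[OF qT] by auto
  ultimately show ?thesis unfolding g_def a_def quv by simp
qed


lemma final: assumes pT: "p \<in> T"
  shows "1 / (Om p)\<^sup>2 \<le> (2 * (M + 1) / M\<^sup>2) * r p powr (1 - (4 / M\<^sup>2) * eps\<^sup>2)"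
proof -
  have pE: "p \<in> E" using TE pT .
  have pD: "p \<in> D" using ED pE .
  have rp: "r p > 0" and Omp: "Om p > 0" using pos[OF pD] by auto
  have nl: "du r p < 0" "dv r p < 0" using neg[OF pE] by auto
  define R where "R = r p powr (K\<^sup>2)"
  have R: "R > 0" unfolding R_def using rp by simp
  define m where "m = (1-eps) * M"
  have m: "m > 0" unfolding m_def using eps M by simp
  have a1: "m \<le> - (r p * du r p)" "m \<le> - (r p * dv r p)" using rnu[OF pE] rla[OF pE] unfolding m_def by (simp_all add: algebra_simps)
  have A: "m * m \<le> (r p * du r p) * (r p * dv r p)"
    using mult_mono[OF a1] m a1 by simp
  have W0: "Wf p > 0" using Wpos[OF pE] .
  have Om2: "1 / (Om p)\<^sup>2 = Wf p * r p / ((r p * du r p) * (r p * dv r p))"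
    unfolding Wf_def using rp Omp nl by (simp add: field_simps power2_eq_square)
  also have "\<dots> \<le> Wf p * r p / (m * m)"
  proof (rule divide_left_mono)
    show "0 < (r p * du r p) * (r p * dv r p) * (m * m)"
    proof -
      have "0 < m * m" using m by simp
      then have "0 < (r p * du r p) * (r p * dv r p)" using A by linarith
      then show ?thesis using \<open>0 < m * m\<close> by (rule mult_pos_pos)
    qed
  qed (use W0 rp A in auto)
  also have "\<dots> \<le> ((M + 1/4) / R) * r p / (m * m)"
  proof -
    have "Wf p \<le> (M + 1/4) / R" using W_bound[OF pT] R unfolding R_def by (simp add: pos_le_divide_eq)
    then show ?thesis using rp m by (intro divide_right_mono mult_right_mono) auto
  qed
  also have "\<dots> = ((M + 1/4) / (m * m)) * (r p / R)" by (simp add: field_simps)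
  also have "\<dots> \<le> (2 * (M + 1) / M\<^sup>2) * (r p / R)"
  proof (rule mult_right_mono)
    show "0 \<le> r p / R" using rp R by simp
    have e9: "9/10 \<le> 1 - eps" using eps by simp
    have "9/10 * (9/10) \<le> (1-eps) * (1-eps)" by (rule mult_mono[OF e9 e9]) (use eps in auto)
    then have e2: "(1-eps) * (1-eps) \<ge> 1/2" by simp
    have mm2: "m * m = ((1-eps) * (1-eps)) * M\<^sup>2" unfolding m_def by (simp add: power2_eq_square algebra_simps)
    have "(1/2) * M\<^sup>2 \<le> ((1-eps) * (1-eps)) * M\<^sup>2" by (rule mult_right_mono[OF e2]) simp
    then have "M\<^sup>2 / 2 \<le> m * m" unfolding mm2 by simp
    then have "(M + 1/4) / (m * m) \<le> (M + 1/4) / (M\<^sup>2 / 2)"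
      using M m by (intro divide_left_mono) auto
    also have "\<dots> \<le> 2 * (M + 1) / M\<^sup>2" using M by (simp add: field_simps)
    finally show "(M + 1/4) / (m * m) \<le> 2 * (M + 1) / M\<^sup>2" .
  qed
  also have "r p / R = r p powr (1 - (4 / M\<^sup>2) * eps\<^sup>2)"
  proof -
    have "K\<^sup>2 = (4 / M\<^sup>2) * eps\<^sup>2" unfolding K_def by (simp add: power2_eq_square field_simps)
    then show ?thesis unfolding R_def using rp by (simp add: powr_diff)
  qed
  finally show ?thesis .
qed

end


theorem mainTheorem14:
  fixes M :: real
  assumes "M > 0"
  shows "\<exists>C c. C > 0 \<and> c > 0 \<and> (\<exists>L0::nat. \<forall>l0\<ge>L0. \<exists>\<epsilon>0>0. \<forall>\<epsilon>. 0 < \<epsilon> \<and> \<epsilon> \<le> \<epsilon>0 \<longrightarrow>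
    (\<forall>D r \<Omega> \<phi> U V.
       ES_solution D r \<Omega> \<phi> \<and> trapezoid_geometry D r l0 U V \<and>
       near_schwarzschild_data M \<epsilon> (curve D r l0 U V) r \<Omega> \<phi> \<longrightarrow>
       (\<forall>p\<in>trapezoid D r l0 U V. 1 / (\<Omega> p)\<^sup>2 \<le> C * r p powr (1 - c * \<epsilon>\<^sup>2))))"
proof -
  define C where "C = 2 * (M + 1) / M\<^sup>2"
  define c where "c = 4 / M\<^sup>2"
  have C: "C > 0" and c: "c > 0" unfolding C_def c_def using assms by auto
  have key: "1 / (\<Omega> p)\<^sup>2 \<le> C * r p powr (1 - c * \<epsilon>\<^sup>2)"
    if "0 < \<epsilon>" "\<epsilon> \<le> 1/10" "ES_solution D r \<Omega> \<phi>" "trapezoid_geometry D r l0 U V"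
      "near_schwarzschild_data M \<epsilon> (curve D r l0 U V) r \<Omega> \<phi>" "p \<in> trapezoid D r l0 U V"
    for l0 \<epsilon> D r \<Omega> \<phi> U V p
  proof -
    interpret setting M \<epsilon> l0 D r \<Omega> \<phi> U V
      using that assms by unfold_locales auto
    show ?thesis using final[OF that(6)] unfolding C_def c_def .
  qed
  show ?thesis
    apply (rule exI[of _ C], rule exI[of _ c])
    apply (intro conjI C c exI[of _ "0::nat"] allI impI)
    apply (rule exI[of _ "1/10"])
    using key by auto
qed

end
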